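(* Let $V$ be a finite set, $\mu\colon\binom V2\to\mathbb{Z}_+$, $e=\{v_1,v_2\}\in\binom V2$, $r=\mu(e)$, and let $\mu_1\colon\binom V2\to\mathbb{Z}_+$ agree with $\mu$ except that $\mu_1(e)=1$. Then \[ n(\mu,V)=r\,n(\mu_1,V)+(r-1)\big[n(\mu,V\setminus\{v_1\})+n(\mu,V\setminus\{v_2\})+n(\mu,V\setminus\{v_1,v_2\})\big], \] where $n(\mu,W)$ for $W\subseteq V$ means $n$ of the restriction of $\mu$ to $\binom W2$.
   Context: For a finite set $W$ with $|W|=m$ and $\mu\colon\binom W2\to\mathbb{Z}_+$, $n(\mu,W)=\sum_{J\subseteq W,|J|\geqslant2}(-1)^{m-|J|}\prod_{e\in\binom J2}\mu(e)+(-1)^{m-1}(m-1)$. (This is the number of $(m-1)$-spheres in the wedge to which the edge inflation $(\Delta_W)_\mu$ of the full simplex on $W$ is homotopy equivalent; e.g. $n(\mu,\varnothing)=1$.) *)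

theory Defs
  imports Main
begin

definition two_subsets :: "'a set \<Rightarrow> 'a set set" where
  "two_subsets W = {e. e \<subseteq> W \<and> card e = 2}"

text \<open>The sign (-1)^(m-1) is written as (-1)^(m+1)
  to avoid natural-number truncation at m = 0 (same parity); similarly
  (-1)^(m-|J|) with |J| <= m.\<close>
definition nmu :: "('a set \<Rightarrow> int) \<Rightarrow> 'a set \<Rightarrow> int" where
  "nmu \<mu> W = (\<Sum>J \<in> {J. J \<subseteq> W \<and> card J \<ge> 2}.
       (-1) ^ (card W - card J) * (\<Prod>e \<in> two_subsets J. \<mu> e))
     + (-1) ^ (card W + 1) * (int (card W) - 1)"

end

theory Submission
  imports Defs
begin

theorem lemma4p4:
  fixes V :: "'a set" and \<mu> \<mu>1 :: "'a set \<Rightarrow> int" and v1 v2 :: 'a and r :: int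
  assumes "finite V"
    and "\<forall>e \<in> two_subsets V. \<mu> e \<ge> 1"
    and "v1 \<in> V" and "v2 \<in> V" and "v1 \<noteq> v2"
    and "r = \<mu> {v1, v2}"
    and "\<forall>e \<in> two_subsets V. e \<noteq> {v1, v2} \<longrightarrow> \<mu>1 e = \<mu> e"
    and "\<mu>1 {v1, v2} = 1"
  shows "nmu \<mu> V = r * nmu \<mu>1 V
           + (r - 1) * (nmu \<mu> (V - {v1}) + nmu \<mu> (V - {v2}) + nmu \<mu> (V - {v1, v2}))"
proof -
  note fin = assms(1)
  define P where "P f J = (\<Prod>e \<in> two_subsets J. f e)" for f :: "'a set \<Rightarrow> int" and J
  define m where "m = card V"
  obtain k where mk: "m = k + 2"
  proof -
    have "{v1,v2} \<subseteq> V" using assms by auto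
    hence "card {v1,v2} \<le> m" unfolding m_def using card_mono fin by blast
    hence "m \<ge> 2" using assms(5) by simp
    thus ?thesis using that by (metis add.commute le_Suc_ex)
  qed
  have c1: "card (V - {v1}) = k + 1" using fin assms mk m_def by simp
  have c2: "card (V - {v2}) = k + 1" using fin assms mk m_def by simp
  have c12: "card (V - {v1, v2}) = k" using fin assms mk m_def
    by (simp add: card_Diff_subset)
  define s where "s J = (-1::int) ^ (m - card J)" for J :: "'a set"
  define F where "F = {J. J \<subseteq> V \<and> card J \<ge> 2}"
  define FA where "FA = {J \<in> F. v1 \<in> J \<and> v2 \<in> J}"
  define FB where "FB = {J \<in> F. \<not> (v1 \<in> J \<and> v2 \<in> J)}"
  define G1 where "G1 = {J. J \<subseteq> V - {v1} \<and> card J \<ge> 2}"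
  define G2 where "G2 = {J. J \<subseteq> V - {v2} \<and> card J \<ge> 2}"
  define G12 where "G12 = {J. J \<subseteq> V - {v1, v2} \<and> card J \<ge> 2}"
  have finF: "finite F" unfolding F_def using fin by (auto intro: finite_subset[of _ "Pow V"])
  have finFA: "finite FA" "finite FB" using finF unfolding FA_def FB_def by auto
  have finG: "finite G1" "finite G2" using fin unfolding G1_def G2_def
    by (auto intro: finite_subset[of _ "Pow V"])
  have FAB: "F = FA \<union> FB" "FA \<inter> FB = {}" unfolding FA_def FB_def by auto
  have FBG: "FB = G1 \<union> G2" "G1 \<inter> G2 = G12"
    unfolding FB_def G1_def G2_def G12_def F_def by auto
  have nmuV: "nmu f V = (\<Sum>J\<in>FA. s J * P f J) + (\<Sum>J\<in>FB. s J * P f J)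
      + (-1) ^ (m + 1) * (int m - 1)" for f
  proof -
    have "nmu f V = (\<Sum>J\<in>F. s J * P f J) + (-1) ^ (m + 1) * (int m - 1)"
      unfolding nmu_def s_def P_def F_def m_def by simp
    also have "(\<Sum>J\<in>F. s J * P f J) = (\<Sum>J\<in>FA. s J * P f J) + (\<Sum>J\<in>FB. s J * P f J)"
      unfolding FAB(1) using finFA FAB(2) by (simp add: sum.union_disjoint)
    finally show ?thesis .
  qed
  have PA: "P \<mu> J = r * P \<mu>1 J" if "J \<in> FA" for J
  proof -
    have J: "J \<subseteq> V" "v1 \<in> J" "v2 \<in> J" using that unfolding FA_def F_def by auto
    have finJ: "finite (two_subsets J)" unfolding two_subsets_def
      using finite_subset[OF J(1) fin] by (auto intro: finite_subset[of _ "Pow J"])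
    have e: "{v1,v2} \<in> two_subsets J" unfolding two_subsets_def using J assms(5) by auto
    have "P \<mu> J = \<mu> {v1,v2} * (\<Prod>e \<in> two_subsets J - {{v1,v2}}. \<mu> e)"
      unfolding P_def using prod.remove[OF finJ e] by simp
    also have "(\<Prod>e \<in> two_subsets J - {{v1,v2}}. \<mu> e) = (\<Prod>e \<in> two_subsets J - {{v1,v2}}. \<mu>1 e)"
    proof (rule prod.cong)
      fix e assume "e \<in> two_subsets J - {{v1,v2}}"
      hence "e \<in> two_subsets V" "e \<noteq> {v1,v2}" using J(1) unfolding two_subsets_def by auto
      thus "\<mu> e = \<mu>1 e" using assms(7) by simp
    qed simp
    also have "\<dots> = P \<mu>1 J" unfolding P_def using prod.remove[OF finJ e, of \<mu>1] assms(8) by simp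
    finally show ?thesis using assms(6) by simp
  qed
  have PB: "P \<mu>1 J = P \<mu> J" if "J \<in> FB" for J
  proof -
    have J: "J \<subseteq> V" "\<not> (v1 \<in> J \<and> v2 \<in> J)" using that unfolding FB_def F_def by auto
    show ?thesis unfolding P_def using assms(7) J
      by (intro prod.cong) (auto simp: two_subsets_def)
  qed
  have SA: "(\<Sum>J\<in>FA. s J * P \<mu> J) = r * (\<Sum>J\<in>FA. s J * P \<mu>1 J)"
    by (simp add: sum_distrib_left PA algebra_simps)
  have SB: "(\<Sum>J\<in>FB. s J * P \<mu>1 J) = (\<Sum>J\<in>FB. s J * P \<mu> J)"
    by (rule sum.cong) (simp_all add: PB)
  define X where "X = (\<Sum>J\<in>FB. s J * P \<mu> J)"
  have XG: "X = (\<Sum>J\<in>G1. s J * P \<mu> J) + (\<Sum>J\<in>G2. s J * P \<mu> J) - (\<Sum>J\<in>G12. s J * P \<mu> J)"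
    unfolding X_def FBG(1) using sum.union_inter[OF finG, of "\<lambda>J. s J * P \<mu> J"] FBG(2)
    by simp
  have n1: "nmu \<mu> (V - {v1}) = - (\<Sum>J\<in>G1. s J * P \<mu> J) + (-1)^k * int k"
  proof -
    have "(\<Sum>J\<in>G1. s J * P \<mu> J) = - (\<Sum>J\<in>G1. (-1) ^ (k + 1 - card J) * P \<mu> J)"
      unfolding sum_negf[symmetric]
    proof (rule sum.cong)
      fix J assume "J \<in> G1"
      hence "card J \<le> k + 1" unfolding G1_def using c1 fin
        by (metis (mono_tags, lifting) card_mono finite_Diff mem_Collect_eq)
      hence "m - card J = Suc (k + 1 - card J)" using mk by simp
      thus "s J * P \<mu> J = - ((-1) ^ (k + 1 - card J) * P \<mu> J)" unfolding s_def by simp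
    qed simp
    thus ?thesis unfolding nmu_def c1 G1_def P_def by simp
  qed
  have n2: "nmu \<mu> (V - {v2}) = - (\<Sum>J\<in>G2. s J * P \<mu> J) + (-1)^k * int k"
  proof -
    have "(\<Sum>J\<in>G2. s J * P \<mu> J) = - (\<Sum>J\<in>G2. (-1) ^ (k + 1 - card J) * P \<mu> J)"
      unfolding sum_negf[symmetric]
    proof (rule sum.cong)
      fix J assume "J \<in> G2"
      hence "card J \<le> k + 1" unfolding G2_def using c2 fin
        by (metis (mono_tags, lifting) card_mono finite_Diff mem_Collect_eq)
      hence "m - card J = Suc (k + 1 - card J)" using mk by simp
      thus "s J * P \<mu> J = - ((-1) ^ (k + 1 - card J) * P \<mu> J)" unfolding s_def by simp
    qed simp
    thus ?thesis unfolding nmu_def c2 G2_def P_def by simp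
  qed
  have n12: "nmu \<mu> (V - {v1, v2}) = (\<Sum>J\<in>G12. s J * P \<mu> J) - (-1)^k * (int k - 1)"
  proof -
    have "(\<Sum>J\<in>G12. s J * P \<mu> J) = (\<Sum>J\<in>G12. (-1) ^ (k - card J) * P \<mu> J)"
    proof (rule sum.cong)
      fix J assume "J \<in> G12"
      hence "card J \<le> k" unfolding G12_def using c12 fin
        by (metis (mono_tags, lifting) card_mono finite_Diff mem_Collect_eq)
      hence "m - card J = Suc (Suc (k - card J))" using mk by simp
      thus "s J * P \<mu> J = (-1) ^ (k - card J) * P \<mu> J" unfolding s_def by simp
    qed simp
    thus ?thesis unfolding nmu_def c12 G12_def P_def by simp
  qed
  have cm: "(-1::int) ^ (m + 1) * (int m - 1) = - ((-1)^k * (int k + 1))"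
    using mk by simp
  show ?thesis
    unfolding nmuV[of \<mu>] nmuV[of \<mu>1] SA SB n1 n2 n12 cm X_def[symmetric]
    unfolding XG by (simp add: algebra_simps)
qed

end
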